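(* The canonical structure $\mathbb{M}=(\mathbb{P},V)$ is a polarity-based (conceptual) $\mathbf{A}$-model; that is, for every atomic proposition $p\in\mathsf{Prop}$, the pair $V(p)=([\![p]\!],(\![p]\!))$ is a formal $\mathbf{A}$-concept of $\mathbb{P}$: $[\![p]\!]^{\uparrow}=(\![p]\!)$ and $[\![p]\!]=(\![p]\!)^{\downarrow}$.
   Context: Let $\mathbf{A}=(D,1,0,\vee,\wedge,\otimes,\to)$ be a complete, frame-distributive and dually frame-distributive, commutative and associative residuated lattice with $1\to\alpha=\alpha$ for all $\alpha$. Let $\mathcal{L}$ be the language $\varphi::=\bot\mid\top\mid p\mid\varphi\wedge\varphi\mid\varphi\vee\varphi\mid\Box\varphi\mid\Diamond\varphi$ and $\mathbf{L}$ the basic normal non-distributive modal logic (lattice axioms, $\top\vdash\Box\top$, $\Box p\wedge\Box q\vdash\Box(p\wedge q)$, $\Diamond\bot\vdash\bot$, $\Diamond(p\vee q)\vdash\Diamond p\vee\Diamond q$, closed under cut, substitution, the $\wedge$/$\vee$ rules and monotonicity of $\Box,\Diamond$). Let $\mathbf{Fm}$ be its Lindenbaum–Tarski algebra (formulas identified with their classes). A proper $\mathbf{A}$-filter is a map $f:\mathbf{Fm}\to\mathbf{A}$ with $f(\top)=1$, $f(\bot)=0$, $f(a\wedge b)=f(a)\wedge f(b)$; a proper $\mathbf{A}$-ideal is $i:\mathbf{Fm}\to\mathbf{A}$ with $i(\bot)=1$, $i(\top)=0$, $i(a\vee b)=i(a)\wedge i(b)$. $\mathsf{F}_{\mathbf{A}}(\mathbf{Fm})$,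 $\mathsf{I}_{\mathbf{A}}(\mathbf{Fm})$ are the sets of these. The canonical frame is $\mathbb{P}=(\mathsf{F}_{\mathbf{A}}(\mathbf{Fm}),\mathsf{I}_{\mathbf{A}}(\mathbf{Fm}),I,R_\Diamond,R_\Box)$ with $I(f,i)=\bigvee_{\phi}(f(\phi)\otimes i(\phi))$, $R_\Diamond(i,f)=\bigvee_\phi(f(\phi)\otimes i(\Diamond\phi))$, $R_\Box(f,i)=\bigvee_\phi(f(\Box\phi)\otimes i(\phi))$. For $\mathbf{A}$-subsets, $g^{\uparrow}(i)=\bigwedge_{f}(g(f)\to I(f,i))$ and $u^{\downarrow}(f)=\bigwedge_i(u(i)\to I(f,i))$. The canonical valuation assigns to each $p$ the pair $V(p)=([\![p]\!],(\![p]\!))$ with $[\![p]\!](f)=f(p)$ for $f\in\mathsf{F}_{\mathbf{A}}(\mathbf{Fm})$ and $(\![p]\!)(i)=i(p)$ for $i\in\mathsf{I}_{\mathbf{A}}(\mathbf{Fm})$; here $[\![\cdot]\!]$ denotes the extension (membership) component and $(\![\cdot]\!)$ the intension (description) component of a concept. *)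

theory Defs
  imports Main
begin

text \<open>A is a complete lattice (carrier = the type 'a) with 1 = top and 0 = bot,
  equipped with a commutative associative monoid operation otimes with unit 1 and
  its residual rimp (a otimes b <= c iff b <= a rimp c).\<close>

definition res_alg :: "('a::complete_lattice \<Rightarrow> 'a \<Rightarrow> 'a) \<Rightarrow> ('a \<Rightarrow> 'a \<Rightarrow> 'a) \<Rightarrow> bool" where
  "res_alg otimes rimp \<longleftrightarrow>
     (\<forall>a b c. otimes (otimes a b) c = otimes a (otimes b c)) \<and>
     (\<forall>a b. otimes a b = otimes b a) \<and>
     (\<forall>a. otimes top a = a) \<and>
     (\<forall>a b c. otimes a b \<le> c \<longleftrightarrow> b \<le> rimp a c) \<and>
     (\<forall>a (B::'a set). inf a (Sup B) = (SUP b\<in>B. inf a b)) \<and>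
     (\<forall>a (B::'a set). sup a (Inf B) = (INF b\<in>B. sup a b)) \<and>
     (\<forall>a. rimp top a = a)"

datatype 'p fm = FBot | FTop | Var 'p | FAnd "'p fm" "'p fm" | FOr "'p fm" "'p fm"
  | FBox "'p fm" | FDia "'p fm"

text \<open>Sequents phi |- psi derivable in L (axioms as schemata, so closure under
  substitution is built in).\<close>

inductive prov :: "'p fm \<Rightarrow> 'p fm \<Rightarrow> bool" where
  refl: "prov a a"
| bot: "prov FBot a"
| top: "prov a FTop"
| andE1: "prov (FAnd a b) a"
| andE2: "prov (FAnd a b) b"
| orI1: "prov a (FOr a b)"
| orI2: "prov b (FOr a b)"
| boxtop: "prov FTop (FBox FTop)"
| boxand: "prov (FAnd (FBox a) (FBox b)) (FBox (FAnd a b))"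
| diabot: "prov (FDia FBot) FBot"
| diaor: "prov (FDia (FOr a b)) (FOr (FDia a) (FDia b))"
| cut: "prov a b \<Longrightarrow> prov b c \<Longrightarrow> prov a c"
| andI: "prov c a \<Longrightarrow> prov c b \<Longrightarrow> prov c (FAnd a b)"
| orE: "prov a c \<Longrightarrow> prov b c \<Longrightarrow> prov (FOr a b) c"
| boxmono: "prov a b \<Longrightarrow> prov (FBox a) (FBox b)"
| diamono: "prov a b \<Longrightarrow> prov (FDia a) (FDia b)"

text \<open>Maps on the Lindenbaum-Tarski algebra Fm = maps on formulas that are
  constant on interderivability classes.\<close>

definition respects_LT :: "('p fm \<Rightarrow> 'a) \<Rightarrow> bool" where
  "respects_LT h \<longleftrightarrow> (\<forall>a b. prov a b \<and> prov b a \<longrightarrow> h a = h b)"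

definition AFilters :: "('p fm \<Rightarrow> 'a::complete_lattice) set" where
  "AFilters = {f. respects_LT f \<and> f FTop = top \<and> f FBot = bot \<and>
                 (\<forall>a b. f (FAnd a b) = inf (f a) (f b))}"

definition AIdeals :: "('p fm \<Rightarrow> 'a::complete_lattice) set" where
  "AIdeals = {i. respects_LT i \<and> i FBot = top \<and> i FTop = bot \<and>
                 (\<forall>a b. i (FOr a b) = inf (i a) (i b))}"

definition canI :: "('a::complete_lattice \<Rightarrow> 'a \<Rightarrow> 'a) \<Rightarrow> ('p fm \<Rightarrow> 'a) \<Rightarrow> ('p fm \<Rightarrow> 'a) \<Rightarrow> 'a" where
  "canI otimes f i = (SUP phi. otimes (f phi) (i phi))"

definition canRDia :: "('a::complete_lattice \<Rightarrow> 'a \<Rightarrow> 'a) \<Rightarrow> ('p fm \<Rightarrow> 'a) \<Rightarrow> ('p fm \<Rightarrow> 'a) \<Rightarrow> 'a" where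
  "canRDia otimes i f = (SUP phi. otimes (f phi) (i (FDia phi)))"

definition canRBox :: "('a::complete_lattice \<Rightarrow> 'a \<Rightarrow> 'a) \<Rightarrow> ('p fm \<Rightarrow> 'a) \<Rightarrow> ('p fm \<Rightarrow> 'a) \<Rightarrow> 'a" where
  "canRBox otimes f i = (SUP phi. otimes (f (FBox phi)) (i phi))"

text \<open>Galois maps of the canonical polarity, on A-subsets of filters / ideals.\<close>

definition up_op :: "('a::complete_lattice \<Rightarrow> 'a \<Rightarrow> 'a) \<Rightarrow> ('a \<Rightarrow> 'a \<Rightarrow> 'a) \<Rightarrow>
    (('p fm \<Rightarrow> 'a) \<Rightarrow> 'a) \<Rightarrow> ('p fm \<Rightarrow> 'a) \<Rightarrow> 'a" where
  "up_op otimes rimp g i = (INF f\<in>AFilters. rimp (g f) (canI otimes f i))"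

definition down_op :: "('a::complete_lattice \<Rightarrow> 'a \<Rightarrow> 'a) \<Rightarrow> ('a \<Rightarrow> 'a \<Rightarrow> 'a) \<Rightarrow>
    (('p fm \<Rightarrow> 'a) \<Rightarrow> 'a) \<Rightarrow> ('p fm \<Rightarrow> 'a) \<Rightarrow> 'a" where
  "down_op otimes rimp u f = (INF i\<in>AIdeals. rimp (u i) (canI otimes f i))"

definition ext_val :: "'p \<Rightarrow> ('p fm \<Rightarrow> 'a) \<Rightarrow> 'a" where
  "ext_val p f = f (Var p)"

definition int_val :: "'p \<Rightarrow> ('p fm \<Rightarrow> 'a) \<Rightarrow> 'a" where
  "int_val p i = i (Var p)"

end

theory Submission
  imports Defs
begin

fun ev :: "('p \<Rightarrow> bool) \<Rightarrow> 'p fm \<Rightarrow> bool" where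
  "ev v FBot = False" | "ev v FTop = True" | "ev v (Var x) = v x"
| "ev v (FAnd a b) = (ev v a \<and> ev v b)" | "ev v (FOr a b) = (ev v a \<or> ev v b)"
| "ev v (FBox a) = ev v a" | "ev v (FDia a) = ev v a"

lemma sound: "prov a b \<Longrightarrow> ev v a \<Longrightarrow> ev v b"
  by (induction rule: prov.induct) auto

lemma not_p_bot: "\<not> prov (Var p) FBot"
  using sound[of "Var p" FBot "\<lambda>_. True"] by auto

lemma not_top_p: "\<not> prov FTop (Var p)"
  using sound[of FTop "Var p" "\<lambda>_. False"] by auto

lemma ideal_anti:
  assumes "i \<in> AIdeals" "prov a b" shows "i b \<le> i a"
proof -
  have "prov (FOr a b) b" "prov b (FOr a b)"
    using assms(2) by (auto intro: prov.intros)
  hence "i (FOr a b) = i b" using assms(1) unfolding AIdeals_def respects_LT_def by blast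
  moreover have "i (FOr a b) = inf (i a) (i b)" using assms(1) unfolding AIdeals_def by blast
  ultimately show ?thesis by (metis inf.cobounded1)
qed

lemma filter_mono:
  assumes "f \<in> AFilters" "prov a b" shows "f a \<le> f b"
proof -
  have "prov (FAnd a b) a" "prov a (FAnd a b)"
    using assms(2) by (auto intro: prov.intros)
  hence "f (FAnd a b) = f a" using assms(1) unfolding AFilters_def respects_LT_def by blast
  moreover have "f (FAnd a b) = inf (f a) (f b)" using assms(1) unfolding AFilters_def by blast
  ultimately show ?thesis by (metis inf.cobounded2)
qed

theorem mainTheorem1:
  fixes otimes rimp :: "'a::complete_lattice \<Rightarrow> 'a \<Rightarrow> 'a" and p :: 'p
  assumes "res_alg otimes rimp"
  shows "(\<forall>i\<in>(AIdeals :: ('p fm \<Rightarrow> 'a) set).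
            up_op otimes rimp (ext_val p) i = int_val p i) \<and>
         (\<forall>f\<in>(AFilters :: ('p fm \<Rightarrow> 'a) set).
            ext_val p f = down_op otimes rimp (int_val p) f)"
proof -
  have comm: "\<And>a b. otimes a b = otimes b a"
    and unit: "\<And>a. otimes top a = a"
    and res: "\<And>a b c. otimes a b \<le> c \<longleftrightarrow> b \<le> rimp a c"
    and rtop: "\<And>a. rimp top a = a"
    using assms unfolding res_alg_def by auto
  have zero: "\<And>b. otimes bot b = bot"
    by (metis bot.extremum bot.extremum_uniqueI comm res)
  have part1: "up_op otimes rimp (ext_val p) i = int_val p i"
    if i: "i \<in> (AIdeals :: ('p fm \<Rightarrow> 'a) set)" for i
  proof (rule antisym)
    define fp :: "'p fm \<Rightarrow> 'a" where "fp = (\<lambda>phi. if prov (Var p) phi then top else bot)"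
    have fpF: "fp \<in> AFilters"
      unfolding AFilters_def respects_LT_def fp_def
      using not_p_bot[of p] by (auto intro: prov.intros dest: prov.cut)
    have "up_op otimes rimp (ext_val p) i \<le> rimp (ext_val p fp) (canI otimes fp i)"
      unfolding up_op_def using fpF by (rule INF_lower)
    also have "\<dots> = canI otimes fp i"
      by (simp add: ext_val_def fp_def prov.refl rtop)
    also have "\<dots> \<le> int_val p i"
      unfolding canI_def int_val_def
    proof (rule SUP_least)
      fix phi
      show "otimes (fp phi) (i phi) \<le> i (Var p)"
        using ideal_anti[OF i] by (auto simp: fp_def unit zero)
    qed
    finally show "up_op otimes rimp (ext_val p) i \<le> int_val p i" .
  next
    show "int_val p i \<le> up_op otimes rimp (ext_val p) i"
      unfolding up_op_def
    proof (rule INF_greatest)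
      fix f :: "'p fm \<Rightarrow> 'a"
      have "otimes (ext_val p f) (int_val p i) \<le> canI otimes f i"
        unfolding canI_def ext_val_def int_val_def by (rule SUP_upper) simp
      thus "int_val p i \<le> rimp (ext_val p f) (canI otimes f i)" using res by blast
    qed
  qed
  have part2: "ext_val p f = down_op otimes rimp (int_val p) f"
    if f: "f \<in> (AFilters :: ('p fm \<Rightarrow> 'a) set)" for f
  proof (rule antisym)
    show "ext_val p f \<le> down_op otimes rimp (int_val p) f"
      unfolding down_op_def
    proof (rule INF_greatest)
      fix i :: "'p fm \<Rightarrow> 'a"
      have "otimes (ext_val p f) (int_val p i) \<le> canI otimes f i"
        unfolding canI_def ext_val_def int_val_def by (rule SUP_upper) simp
      thus "ext_val p f \<le> rimp (int_val p i) (canI otimes f i)" using res comm by metis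
    qed
  next
    define ip :: "'p fm \<Rightarrow> 'a" where "ip = (\<lambda>phi. if prov phi (Var p) then top else bot)"
    have ipI: "ip \<in> AIdeals"
      unfolding AIdeals_def respects_LT_def ip_def
      using not_top_p[of p] by (auto intro: prov.intros dest: prov.cut)
    have "down_op otimes rimp (int_val p) f \<le> rimp (int_val p ip) (canI otimes f ip)"
      unfolding down_op_def using ipI by (rule INF_lower)
    also have "\<dots> = canI otimes f ip"
      by (simp add: int_val_def ip_def prov.refl rtop)
    also have "\<dots> \<le> ext_val p f"
      unfolding canI_def ext_val_def
    proof (rule SUP_least)
      fix phi
      show "otimes (f phi) (ip phi) \<le> f (Var p)"
        using filter_mono[OF f] by (auto simp: ip_def unit zero comm)
    qed
    finally show "down_op otimes rimp (int_val p) f \<le> ext_val p f" .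
  qed
  show ?thesis using part1 part2 by blast
qed

end
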